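(* Let $(A,\cdot,\circ)$ be a skew brace and $B$, $C$ sub-skew braces with $A = B\cdot C$. If either (a) $C$ is a trivial skew brace and a left ideal in $A$, or (b) $B$ is a trivial skew brace and a normal subgroup of $(A,\circ)$, then $B*C$ is a left ideal in $A$.
   Context: A skew brace is a set $A$ with two group operations $\cdot$ (often written by juxtaposition) and $\circ$ such that $a\circ(bc) = (a\circ b)\,a^{-1}\,(a\circ c)$ for all $a,b,c\in A$. $a^{-1}$ denotes the inverse in $(A,\cdot)$. Define $a*b = a^{-1}(a\circ b)b^{-1}$; for subsets $X,Y$, $X*Y$ is the subgroup of $(A,\cdot)$ generated by all $x*y$. A sub-skew brace is a subset that is a subgroup of both groups; it is trivial if $a\circ b=ab$ for all its elements. A subgroup $I$ of $(A,\cdot)$ is a left ideal in $A$ if $A*I\subseteq I$. $A=B\cdot C$ means every element is $bc$ with $b\in B$, $c\in C$. *)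

theory Defs
  imports "HOL-Algebra.Generated_Groups"
begin

definition skew_brace :: "'a monoid \<Rightarrow> 'a monoid \<Rightarrow> bool" where
  "skew_brace G H \<longleftrightarrow> group G \<and> group H \<and> carrier H = carrier G \<and>
     (\<forall>a\<in>carrier G. \<forall>b\<in>carrier G. \<forall>c\<in>carrier G.
        a \<otimes>\<^bsub>H\<^esub> (b \<otimes>\<^bsub>G\<^esub> c) =
        (a \<otimes>\<^bsub>H\<^esub> b) \<otimes>\<^bsub>G\<^esub> inv\<^bsub>G\<^esub> a \<otimes>\<^bsub>G\<^esub> (a \<otimes>\<^bsub>H\<^esub> c))"

definition brace_star :: "'a monoid \<Rightarrow> 'a monoid \<Rightarrow> 'a \<Rightarrow> 'a \<Rightarrow> 'a" where
  "brace_star G H a b = inv\<^bsub>G\<^esub> a \<otimes>\<^bsub>G\<^esub> (a \<otimes>\<^bsub>H\<^esub> b) \<otimes>\<^bsub>G\<^esub> inv\<^bsub>G\<^esub> b"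

definition brace_star_set :: "'a monoid \<Rightarrow> 'a monoid \<Rightarrow> 'a set \<Rightarrow> 'a set \<Rightarrow> 'a set" where
  "brace_star_set G H S T = generate G {z. \<exists>x\<in>S. \<exists>y\<in>T. z = brace_star G H x y}"

definition sub_skew_brace :: "'a monoid \<Rightarrow> 'a monoid \<Rightarrow> 'a set \<Rightarrow> bool" where
  "sub_skew_brace G H B \<longleftrightarrow> subgroup B G \<and> subgroup B H"

definition trivial_on :: "'a monoid \<Rightarrow> 'a monoid \<Rightarrow> 'a set \<Rightarrow> bool" where
  "trivial_on G H B \<longleftrightarrow> (\<forall>a\<in>B. \<forall>b\<in>B. a \<otimes>\<^bsub>H\<^esub> b = a \<otimes>\<^bsub>G\<^esub> b)"

definition left_ideal :: "'a monoid \<Rightarrow> 'a monoid \<Rightarrow> 'a set \<Rightarrow> bool" where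
  "left_ideal G H I \<longleftrightarrow> subgroup I G \<and> brace_star_set G H (carrier G) I \<subseteq> I"

end

theory Submission
  imports Defs
begin

locale skb = G: group G + H: group H for G H :: "'a monoid" +
  assumes car: "carrier H = carrier G"
  and ax: "\<And>a b c. a \<in> carrier G \<Longrightarrow> b \<in> carrier G \<Longrightarrow> c \<in> carrier G \<Longrightarrow>
     a \<otimes>\<^bsub>H\<^esub> (b \<otimes>\<^bsub>G\<^esub> c) =
        (a \<otimes>\<^bsub>H\<^esub> b) \<otimes>\<^bsub>G\<^esub> inv\<^bsub>G\<^esub> a \<otimes>\<^bsub>G\<^esub> (a \<otimes>\<^bsub>H\<^esub> c)"
begin

definition lam where "lam a x = inv\<^bsub>G\<^esub> a \<otimes>\<^bsub>G\<^esub> (a \<otimes>\<^bsub>H\<^esub> x)"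

lemma Hc: "a \<in> carrier G \<Longrightarrow> b \<in> carrier G \<Longrightarrow> a \<otimes>\<^bsub>H\<^esub> b \<in> carrier G"
  using H.m_closed car by auto

lemma lam_closed: "a \<in> carrier G \<Longrightarrow> x \<in> carrier G \<Longrightarrow> lam a x \<in> carrier G"
  unfolding lam_def using Hc by simp

lemma lam_mult: "a \<in> carrier G \<Longrightarrow> x \<in> carrier G \<Longrightarrow> y \<in> carrier G \<Longrightarrow>
   lam a (x \<otimes>\<^bsub>G\<^esub> y) = lam a x \<otimes>\<^bsub>G\<^esub> lam a y"
  unfolding lam_def using ax[of a x y] Hc by (simp add: G.m_assoc)

lemma lam_one: "a \<in> carrier G \<Longrightarrow> lam a \<one>\<^bsub>G\<^esub> = \<one>\<^bsub>G\<^esub>"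
proof -
  assume a: "a \<in> carrier G"
  have "lam a \<one>\<^bsub>G\<^esub> \<otimes>\<^bsub>G\<^esub> lam a \<one>\<^bsub>G\<^esub> = lam a \<one>\<^bsub>G\<^esub> \<otimes>\<^bsub>G\<^esub> \<one>\<^bsub>G\<^esub>"
    using lam_mult[of a "\<one>\<^bsub>G\<^esub>" "\<one>\<^bsub>G\<^esub>"] a lam_closed by simp
  then show ?thesis using a lam_closed by (metis G.one_closed G.l_cancel_one G.r_one)
qed

lemma H_one: "a \<in> carrier G \<Longrightarrow> a \<otimes>\<^bsub>H\<^esub> \<one>\<^bsub>G\<^esub> = a"
  using lam_one[of a] unfolding lam_def
  by (metis G.inv_closed G.inv_equality G.inv_inv G.one_closed Hc)

lemma one_eq: "\<one>\<^bsub>H\<^esub> = \<one>\<^bsub>G\<^esub>"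
  using H_one[of "\<one>\<^bsub>H\<^esub>"] car H.l_one[of "\<one>\<^bsub>G\<^esub>"] H.one_closed by auto

lemma c1: "z \<in> carrier G \<Longrightarrow> y \<in> carrier G \<Longrightarrow> z \<otimes>\<^bsub>G\<^esub> (inv\<^bsub>G\<^esub> z \<otimes>\<^bsub>G\<^esub> y) = y"
  by (simp add: G.m_assoc[symmetric])
lemma c2: "z \<in> carrier G \<Longrightarrow> y \<in> carrier G \<Longrightarrow> inv\<^bsub>G\<^esub> z \<otimes>\<^bsub>G\<^esub> (z \<otimes>\<^bsub>G\<^esub> y) = y"
  by (simp add: G.m_assoc[symmetric])

lemma lam_inv: "a \<in> carrier G \<Longrightarrow> x \<in> carrier G \<Longrightarrow> lam a (inv\<^bsub>G\<^esub> x) = inv\<^bsub>G\<^esub> (lam a x)"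
  using lam_mult[of a x "inv\<^bsub>G\<^esub> x"] lam_one[of a] lam_closed
  by (metis G.inv_closed G.inv_equality G.inv_inv G.r_inv)

lemma H_eq: "a \<in> carrier G \<Longrightarrow> x \<in> carrier G \<Longrightarrow> a \<otimes>\<^bsub>H\<^esub> x = a \<otimes>\<^bsub>G\<^esub> lam a x"
  unfolding lam_def using Hc by (simp add: G.m_assoc[symmetric])

lemma lam_comp: "a \<in> carrier G \<Longrightarrow> b \<in> carrier G \<Longrightarrow> x \<in> carrier G \<Longrightarrow>
   lam (a \<otimes>\<^bsub>H\<^esub> b) x = lam a (lam b x)"
proof -
  assume a: "a \<in> carrier G" and b: "b \<in> carrier G" and x: "x \<in> carrier G"
  have "lam a (lam b x) = lam a (inv\<^bsub>G\<^esub> b) \<otimes>\<^bsub>G\<^esub> lam a (b \<otimes>\<^bsub>H\<^esub> x)"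
    unfolding lam_def[of b x] using lam_mult a b x Hc by simp
  also have "\<dots> = inv\<^bsub>G\<^esub> (inv\<^bsub>G\<^esub> a \<otimes>\<^bsub>G\<^esub> (a \<otimes>\<^bsub>H\<^esub> b)) \<otimes>\<^bsub>G\<^esub>
      (inv\<^bsub>G\<^esub> a \<otimes>\<^bsub>G\<^esub> (a \<otimes>\<^bsub>H\<^esub> (b \<otimes>\<^bsub>H\<^esub> x)))"
    using lam_inv a b x Hc unfolding lam_def by simp
  also have "\<dots> = inv\<^bsub>G\<^esub> (a \<otimes>\<^bsub>H\<^esub> b) \<otimes>\<^bsub>G\<^esub> (a \<otimes>\<^bsub>H\<^esub> (b \<otimes>\<^bsub>H\<^esub> x))"
    using a b x Hc by (simp add: G.inv_mult_group G.m_assoc c1 c2)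
  also have "\<dots> = lam (a \<otimes>\<^bsub>H\<^esub> b) x"
    unfolding lam_def using a b x car by (simp add: H.m_assoc)
  finally show ?thesis by simp
qed

lemma lam_1: "x \<in> carrier G \<Longrightarrow> lam \<one>\<^bsub>G\<^esub> x = x"
  unfolding lam_def using one_eq car H.l_one by (metis G.inv_one G.l_one G.one_closed)

lemma star_eq: "brace_star G H a b = lam a b \<otimes>\<^bsub>G\<^esub> inv\<^bsub>G\<^esub> b"
  unfolding brace_star_def lam_def ..

lemma star_lam: "a \<in> carrier G \<Longrightarrow> b \<in> carrier G \<Longrightarrow> c \<in> carrier G \<Longrightarrow>
  lam a (brace_star G H b c) = brace_star G H (a \<otimes>\<^bsub>H\<^esub> b) c \<otimes>\<^bsub>G\<^esub> inv\<^bsub>G\<^esub> (brace_star G H a c)"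
  unfolding star_eq using lam_mult lam_inv lam_comp lam_closed Hc
  by (simp add: G.inv_mult_group G.m_assoc c1 c2)

end

theorem proposition3p2:
  fixes G H :: "'a monoid" and B C :: "'a set"
  assumes "skew_brace G H"
    and "sub_skew_brace G H B" and "sub_skew_brace G H C"
    and "carrier G = B <#>\<^bsub>G\<^esub> C"
    and "(trivial_on G H C \<and> left_ideal G H C) \<or> (trivial_on G H B \<and> B \<lhd> H)"
  shows "left_ideal G H (brace_star_set G H B C)"
proof -
  interpret skb G H
    using assms(1) unfolding skew_brace_def by (intro skb.intro skb_axioms.intro) auto
  have BG: "subgroup B G" and BH: "subgroup B H" and CG: "subgroup C G" and CH: "subgroup C H"
    using assms(2,3) unfolding sub_skew_brace_def by auto
  have Bc: "B \<subseteq> carrier G" and Cc: "C \<subseteq> carrier G"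
    using BG CG subgroup.subset by auto
  have starc: "\<And>a b. a \<in> carrier G \<Longrightarrow> b \<in> carrier G \<Longrightarrow> brace_star G H a b \<in> carrier G"
    unfolding star_eq using lam_closed by simp
  define S where "S = {z. \<exists>x\<in>B. \<exists>y\<in>C. z = brace_star G H x y}"
  have SI: "brace_star_set G H B C = generate G S"
    unfolding S_def brace_star_set_def ..
  have Scar: "S \<subseteq> carrier G" unfolding S_def using starc Bc Cc by blast
  have sg: "subgroup (generate G S) G" using G.generate_is_subgroup[OF Scar] .
  have inS: "\<And>x y. x \<in> B \<Longrightarrow> y \<in> C \<Longrightarrow> brace_star G H x y \<in> generate G S"
    unfolding S_def by (rule generate.incl) blast
  have gen: "\<And>a x. a \<in> carrier G \<Longrightarrow> x \<in> S \<Longrightarrow> lam a x \<in> generate G S"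
  proof -
    fix a x assume a: "a \<in> carrier G" and x: "x \<in> S"
    then obtain b c where b: "b \<in> B" and c: "c \<in> C" and xe: "x = brace_star G H b c"
      unfolding S_def by blast
    have bG: "b \<in> carrier G" and cG: "c \<in> carrier G" using b c Bc Cc by auto
    show "lam a x \<in> generate G S"
      using assms(5)
    proof
      assume "trivial_on G H C \<and> left_ideal G H C"
      then have tr: "trivial_on G H C" and li: "left_ideal G H C" by auto
      have lamC: "\<And>z c. z \<in> carrier G \<Longrightarrow> c \<in> C \<Longrightarrow> lam z c \<in> C"
      proof -
        fix z c assume z: "z \<in> carrier G" and c: "c \<in> C"
        have "brace_star G H z c \<in> brace_star_set G H (carrier G) C"
          unfolding brace_star_set_def by (rule generate.incl) (use z c in blast)
        then have "brace_star G H z c \<in> C" using li unfolding left_ideal_def by blast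
        then have "brace_star G H z c \<otimes>\<^bsub>G\<^esub> c \<in> C" using subgroup.m_closed[OF CG _ c] by blast
        moreover have "brace_star G H z c \<otimes>\<^bsub>G\<^esub> c = lam z c"
          unfolding star_eq using z subsetD[OF Cc c] lam_closed by (simp add: G.m_assoc)
        ultimately show "lam z c \<in> C" by simp
      qed
      have dec: "\<And>a. a \<in> carrier G \<Longrightarrow> \<exists>b1\<in>B. \<exists>c1\<in>C. a = b1 \<otimes>\<^bsub>H\<^esub> c1"
      proof -
        fix a assume "a \<in> carrier G"
        then obtain b' c' where b': "b' \<in> B" and c': "c' \<in> C" and ae: "a = b' \<otimes>\<^bsub>G\<^esub> c'"
          using assms(4) unfolding set_mult_def by auto
        have b'G: "b' \<in> carrier G" and c'G: "c' \<in> carrier G" using b' c' Bc Cc by auto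
        define bb where "bb = inv\<^bsub>H\<^esub> b'"
        have bbG: "bb \<in> carrier G" unfolding bb_def using b'G car H.inv_closed by auto
        have "lam bb c' \<in> C" using lamC bbG c' by blast
        moreover have "b' \<otimes>\<^bsub>H\<^esub> lam bb c' = a"
          using H_eq[of b' "lam bb c'"] lam_comp[of b' bb c'] b'G bbG c'G lam_closed ae
            lam_1[of c'] one_eq car unfolding bb_def by simp
        ultimately show "\<exists>b1\<in>B. \<exists>c1\<in>C. a = b1 \<otimes>\<^bsub>H\<^esub> c1" using b' by metis
      qed
      have triv: "\<And>c1 c. c1 \<in> C \<Longrightarrow> c \<in> C \<Longrightarrow> lam c1 c = c"
        using tr Cc unfolding trivial_on_def lam_def by (auto simp: c2 subsetD)
      have starbc: "\<And>b2 c2 c. b2 \<in> B \<Longrightarrow> c2 \<in> C \<Longrightarrow> c \<in> C \<Longrightarrow>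
          brace_star G H (b2 \<otimes>\<^bsub>H\<^esub> c2) c = brace_star G H b2 c"
        unfolding star_eq using lam_comp triv Bc Cc by (auto simp: subsetD)
      obtain b1 c1 where b1: "b1 \<in> B" and c1: "c1 \<in> C" and ae: "a = b1 \<otimes>\<^bsub>H\<^esub> c1"
        using dec a by blast
      have b1G: "b1 \<in> carrier G" and c1G: "c1 \<in> carrier G" using b1 c1 Bc Cc by auto
      obtain b2 c2 where b2: "b2 \<in> B" and c2: "c2 \<in> C" and e2: "c1 \<otimes>\<^bsub>H\<^esub> b = b2 \<otimes>\<^bsub>H\<^esub> c2"
        using dec[of "c1 \<otimes>\<^bsub>H\<^esub> b"] Hc c1G bG by blast
      have b2G: "b2 \<in> carrier G" using b2 Bc by auto
      have "lam c1 x = brace_star G H b2 c"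
        unfolding xe using star_lam[of c1 b c] c1G bG cG e2 starbc[OF b2 c2 c]
        unfolding star_eq using triv[OF c1 c] b2G lam_closed by simp
      then have "lam a x = brace_star G H (b1 \<otimes>\<^bsub>H\<^esub> b2) c \<otimes>\<^bsub>G\<^esub> inv\<^bsub>G\<^esub> brace_star G H b1 c"
        using ae lam_comp[of b1 c1 x] b1G c1G starc xe bG cG star_lam[of b1 b2 c] b2G by simp
      moreover have "b1 \<otimes>\<^bsub>H\<^esub> b2 \<in> B" using subgroup.m_closed[OF BH b1 b2] .
      ultimately show ?thesis
        using subgroup.m_closed[OF sg inS[OF _ c] subgroup.m_inv_closed[OF sg inS[OF b1 c]]]
        by simp
    next
      assume "trivial_on G H B \<and> B \<lhd> H"
      then have tr: "trivial_on G H B" and nB: "B \<lhd> H" by auto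
      define b'' where "b'' = a \<otimes>\<^bsub>H\<^esub> b \<otimes>\<^bsub>H\<^esub> inv\<^bsub>H\<^esub> a"
      have b''B: "b'' \<in> B" unfolding b''_def
        using normal.inv_op_closed2[OF nB] a b car by auto
      have b''G: "b'' \<in> carrier G" using b''B Bc by auto
      have aH: "a \<in> carrier H" using a car by simp
      have e: "b'' \<otimes>\<^bsub>H\<^esub> a = a \<otimes>\<^bsub>H\<^esub> b"
        unfolding b''_def using aH bG car
        by (metis H.m_assoc H.inv_closed H.m_closed H.l_inv H.r_one)
      define y where "y = lam a c"
      have yG: "y \<in> carrier G" unfolding y_def using lam_closed a cG by simp
      have "lam a x = lam b'' y \<otimes>\<^bsub>G\<^esub> inv\<^bsub>G\<^esub> y"
        unfolding xe using star_lam[of a b c] a bG cG e[symmetric] lam_comp[of b'' a c] b''G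
        unfolding star_eq y_def using lam_closed
        by (simp add: G.inv_mult_group G.m_assoc c1 c2)
      moreover obtain b3 c3 where b3: "b3 \<in> B" and c3: "c3 \<in> C" and ye: "inv\<^bsub>G\<^esub> y = b3 \<otimes>\<^bsub>G\<^esub> c3"
        using assms(4) yG G.inv_closed unfolding set_mult_def by (metis (no_types, lifting) UN_E singletonD)
      have b3G: "b3 \<in> carrier G" and c3G: "c3 \<in> carrier G" using b3 c3 Bc Cc by auto
      have y2: "y = inv\<^bsub>G\<^esub> c3 \<otimes>\<^bsub>G\<^esub> inv\<^bsub>G\<^esub> b3"
        using ye yG b3G c3G by (metis G.inv_inv G.inv_mult_group)
      have lb: "lam b'' (inv\<^bsub>G\<^esub> b3) = inv\<^bsub>G\<^esub> b3"
        using tr b''B b3 BG subgroup.m_inv_closed[OF BG b3] b''G b3G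
        unfolding trivial_on_def lam_def by (simp add: c2)
      have "lam b'' y \<otimes>\<^bsub>G\<^esub> inv\<^bsub>G\<^esub> y = brace_star G H b'' (inv\<^bsub>G\<^esub> c3)"
        unfolding star_eq y2 using lam_mult lb b''G b3G c3G lam_closed
        by (simp add: G.inv_mult_group G.m_assoc c1 c2)
      moreover have "inv\<^bsub>G\<^esub> c3 \<in> C" using subgroup.m_inv_closed[OF CG c3] .
      ultimately show ?thesis using inS b''B by simp
    qed
  qed
  have key: "\<And>a x. a \<in> carrier G \<Longrightarrow> x \<in> generate G S \<Longrightarrow> lam a x \<in> generate G S"
  proof -
    fix a x assume a: "a \<in> carrier G" and x: "x \<in> generate G S"
    from x show "lam a x \<in> generate G S"
    proof (induction x rule: generate.induct)
      case one
      then show ?case using lam_one a generate.one by metis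
    next
      case (incl h)
      then show ?case using gen a by blast
    next
      case (inv h)
      then show ?case using gen a lam_inv Scar subgroup.m_inv_closed[OF sg] by auto
    next
      case (eng h1 h2)
      then show ?case using lam_mult a G.generate_in_carrier[OF Scar] generate.eng by metis
    qed
  qed
  have "brace_star_set G H (carrier G) (generate G S) \<subseteq> generate G S"
    unfolding brace_star_set_def
  proof (rule G.generate_subgroup_incl[OF _ sg])
    show "{z. \<exists>x\<in>carrier G. \<exists>y\<in>generate G S. z = brace_star G H x y} \<subseteq> generate G S"
    proof
      fix z assume "z \<in> {z. \<exists>x\<in>carrier G. \<exists>y\<in>generate G S. z = brace_star G H x y}"
      then obtain u v where u: "u \<in> carrier G" and v: "v \<in> generate G S" and ze: "z = brace_star G H u v"
        by blast
      show "z \<in> generate G S" unfolding ze star_eq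
        using key[OF u v] v subgroup.m_closed[OF sg] subgroup.m_inv_closed[OF sg] by blast
    qed
  qed
  then show ?thesis unfolding left_ideal_def SI using sg by simp
qed

end
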